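(* Let $R$ be a schematic semi-graded ring and $M$ an LSG $R$-module. Then the module of quotients $Q(M)$, with the semi-graduation described below, is $T$-closed in $\mathsf{LSG}\text{-}R$: for every LSG $R$-module $N$, every SG submodule $N'$ of $N$ with $N/N'$ torsion, and every homogeneous $R$-homomorphism $N'\to Q(M)$, there is a unique homogeneous $R$-homomorphism $N\to Q(M)$ extending it.
   Context: Rings are associative with $1$; modules are left modules. A ring $R$ is semi-graded (SG) if there are additive subgroups $R_n$ ($n\in\mathbb{Z}$) with $R=\bigoplus_n R_n$, $R_mR_n\subseteq\bigoplus_{k\le m+n}R_k$, and $1\in R_0$; positively SG if $R_n=0$ for $n<0$. An $R$-module $M$ is SG if $M=\bigoplus_nM_n$ with $R_mM_n\subseteq\bigoplus_{k\le m+n}M_k$ for $m\ge0$; homomorphisms are homogeneous if they preserve degrees; an SG submodule is a submodule $N$ with $N=\bigoplus_n(N\cap M_n)$. Let $R'_n=\{r\in R_n: rh\in R_{n+m}\ \forall m,\forall h\in R_m\}$, $R''_n=\{r\in R'_n: hr\in R_{n+m}\ \forall m,\forall h\in R_m\}$, $R'=\bigcup R'_n$, $R''=\bigcup R''_n$. $M$ is LSG if $R'_nM_m\subseteq M_{n+m}$ for all $n,m$; $\mathsf{LSG}\text{-}R$ is the category of LSG modules with homogeneous homomorphisms. A left Ore set $S$ is good if $S\subseteq R''$ and for $s\in S$, $r\in R'$ there are $u\in R'$, $v\in S$ with $us=vr$. For positively SG $R$, $R_{\ge t}$ is the intersection of all two-sided ideals that are SG submodules containing $\bigoplus_{k\ge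 t}R_k$. $m\in M$ is torsion if $(R_{\ge t})^nm=0$ for some $n,t\ge0$; $T(M)$ is the set of torsion elements. $R$ is schematic if it is positively SG, left Noetherian, and there is a finite set $I$ of good left Ore sets $S$ with $S\cap\bigoplus_{k\ge1}R_k\ne\emptyset$ such that for each $(x_S)\in\prod_{S\in I}S$ there are $t,m$ with $(R_{\ge t})^m\subseteq\sum_{S\in I}Rx_S$. $Q(M)$ is the module of quotients of $M$ with respect to this torsion theory (Goldman/Gabriel localization): an $R$-module containing $M'=M/T(M)$, $T$-torsion-free and $T$-injective in the category of all $R$-modules, with $Q(M)/M'$ torsion. Its semi-graduation: $\xi\in Q(M)$ is homogeneous of degree $k$ iff there exist $n,t\in\mathbb{N}$ with $(R_{\ge n})^t\xi\subseteq M'$ and, for every homogeneous $s\in(R_{\ge n})^t\cap R'$, $s\xi$ is homogeneous of degree $k+\deg s$ in $M'$ (with $M'$ carrying the semi-graduation of $M/T(M)$); with it $Q(M)$ is an LSG $R$-module. *)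

theory Defs
  imports Main
begin

definition add_subgroup :: "'a::ab_group_add set \<Rightarrow> bool" where
  "add_subgroup A \<longleftrightarrow> 0 \<in> A \<and> (\<forall>x\<in>A. \<forall>y\<in>A. x + y \<in> A) \<and> (\<forall>x\<in>A. - x \<in> A)"

definition add_span :: "'a::ab_group_add set \<Rightarrow> 'a set" where
  "add_span A = {sum_list xs | xs. set xs \<subseteq> A}"

definition graded_span :: "(int \<Rightarrow> 'a::ab_group_add set) \<Rightarrow> (int \<Rightarrow> bool) \<Rightarrow> 'a set" where
  "graded_span G P = {x. \<exists>F c. finite F \<and> (\<forall>k\<in>F. P k \<and> c k \<in> G k) \<and> x = sum c F}"

definition direct_grading :: "'a::ab_group_add set \<Rightarrow> (int \<Rightarrow> 'a set) \<Rightarrow> bool" where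
  "direct_grading C G \<longleftrightarrow> (\<forall>n. add_subgroup (G n) \<and> G n \<subseteq> C) \<and>
     (\<forall>x\<in>C. \<exists>!c. finite {n. c n \<noteq> 0} \<and> (\<forall>n. c n \<in> G n) \<and> x = sum c {n. c n \<noteq> 0})"

definition sg_ring :: "(int \<Rightarrow> 'r::ring_1 set) \<Rightarrow> bool" where
  "sg_ring Rg \<longleftrightarrow> direct_grading UNIV Rg \<and>
     (\<forall>m n. \<forall>a\<in>Rg m. \<forall>b\<in>Rg n. a * b \<in> graded_span Rg (\<lambda>k. k \<le> m + n)) \<and> 1 \<in> Rg 0"

definition pos_sg_ring :: "(int \<Rightarrow> 'r::ring_1 set) \<Rightarrow> bool" where
  "pos_sg_ring Rg \<longleftrightarrow> sg_ring Rg \<and> (\<forall>n<0. Rg n = {0})"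

definition Rp :: "(int \<Rightarrow> 'r::ring_1 set) \<Rightarrow> int \<Rightarrow> 'r set" where
  "Rp Rg n = {r \<in> Rg n. \<forall>m. \<forall>h\<in>Rg m. r * h \<in> Rg (n + m)}"

definition Rpp :: "(int \<Rightarrow> 'r::ring_1 set) \<Rightarrow> int \<Rightarrow> 'r set" where
  "Rpp Rg n = {r \<in> Rp Rg n. \<forall>m. \<forall>h\<in>Rg m. h * r \<in> Rg (n + m)}"

definition Rp_all :: "(int \<Rightarrow> 'r::ring_1 set) \<Rightarrow> 'r set" where
  "Rp_all Rg = (\<Union>n. Rp Rg n)"

definition Rpp_all :: "(int \<Rightarrow> 'r::ring_1 set) \<Rightarrow> 'r set" where
  "Rpp_all Rg = (\<Union>n. Rpp Rg n)"

definition left_ideal :: "'r::ring_1 set \<Rightarrow> bool" where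
  "left_ideal I \<longleftrightarrow> add_subgroup I \<and> (\<forall>r. \<forall>a\<in>I. r * a \<in> I)"

definition two_sided_ideal :: "'r::ring_1 set \<Rightarrow> bool" where
  "two_sided_ideal I \<longleftrightarrow> add_subgroup I \<and> (\<forall>r. \<forall>a\<in>I. r * a \<in> I \<and> a * r \<in> I)"

definition sg_subset :: "(int \<Rightarrow> 'a::ab_group_add set) \<Rightarrow> 'a set \<Rightarrow> bool" where
  "sg_subset G N \<longleftrightarrow> (\<forall>x\<in>N. x \<in> graded_span (\<lambda>k. N \<inter> G k) (\<lambda>_. True))"

definition Rge :: "(int \<Rightarrow> 'r::ring_1 set) \<Rightarrow> nat \<Rightarrow> 'r set" where
  "Rge Rg t = \<Inter> {I. two_sided_ideal I \<and> sg_subset Rg I \<and> graded_span Rg (\<lambda>k. k \<ge> int t) \<subseteq> I}"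

definition set_prod :: "'r::ring_1 set \<Rightarrow> 'r set \<Rightarrow> 'r set" where
  "set_prod A B = add_span {a * b | a b. a \<in> A \<and> b \<in> B}"

primrec ideal_pow :: "'r::ring_1 set \<Rightarrow> nat \<Rightarrow> 'r set" where
  "ideal_pow I 0 = UNIV"
| "ideal_pow I (Suc n) = set_prod I (ideal_pow I n)"

definition lmodule :: "'a::ab_group_add set \<Rightarrow> ('r::ring_1 \<Rightarrow> 'a \<Rightarrow> 'a) \<Rightarrow> bool" where
  "lmodule C act \<longleftrightarrow> add_subgroup C \<and> (\<forall>r. \<forall>x\<in>C. act r x \<in> C) \<and>
     (\<forall>r s. \<forall>x\<in>C. act (r + s) x = act r x + act s x) \<and>
     (\<forall>r. \<forall>x\<in>C. \<forall>y\<in>C. act r (x + y) = act r x + act r y) \<and>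
     (\<forall>r s. \<forall>x\<in>C. act (r * s) x = act r (act s x)) \<and> (\<forall>x\<in>C. act 1 x = x)"

definition submodule :: "'a::ab_group_add set \<Rightarrow> ('r::ring_1 \<Rightarrow> 'a \<Rightarrow> 'a) \<Rightarrow> 'a set \<Rightarrow> bool" where
  "submodule C act N \<longleftrightarrow> N \<subseteq> C \<and> add_subgroup N \<and> (\<forall>r. \<forall>x\<in>N. act r x \<in> N)"

definition sg_module :: "(int \<Rightarrow> 'r::ring_1 set) \<Rightarrow> 'a::ab_group_add set \<Rightarrow> ('r \<Rightarrow> 'a \<Rightarrow> 'a)
    \<Rightarrow> (int \<Rightarrow> 'a set) \<Rightarrow> bool" where
  "sg_module Rg C act G \<longleftrightarrow> lmodule C act \<and> direct_grading C G \<and>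
     (\<forall>m\<ge>0. \<forall>n. \<forall>r\<in>Rg m. \<forall>x\<in>G n. act r x \<in> graded_span G (\<lambda>k. k \<le> m + n))"

definition lsg_module :: "(int \<Rightarrow> 'r::ring_1 set) \<Rightarrow> 'a::ab_group_add set \<Rightarrow> ('r \<Rightarrow> 'a \<Rightarrow> 'a)
    \<Rightarrow> (int \<Rightarrow> 'a set) \<Rightarrow> bool" where
  "lsg_module Rg C act G \<longleftrightarrow> sg_module Rg C act G \<and>
     (\<forall>n m. \<forall>r\<in>Rp Rg n. \<forall>x\<in>G m. act r x \<in> G (n + m))"

definition sg_submodule :: "'a::ab_group_add set \<Rightarrow> ('r::ring_1 \<Rightarrow> 'a \<Rightarrow> 'a) \<Rightarrow> (int \<Rightarrow> 'a set)
    \<Rightarrow> 'a set \<Rightarrow> bool" where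
  "sg_submodule C act G N \<longleftrightarrow> submodule C act N \<and> sg_subset G N"

definition is_hom :: "'a::ab_group_add set \<Rightarrow> ('r::ring_1 \<Rightarrow> 'a \<Rightarrow> 'a) \<Rightarrow> 'b::ab_group_add set
    \<Rightarrow> ('r \<Rightarrow> 'b \<Rightarrow> 'b) \<Rightarrow> ('a \<Rightarrow> 'b) \<Rightarrow> bool" where
  "is_hom C act C' act' f \<longleftrightarrow> (\<forall>x\<in>C. f x \<in> C') \<and> (\<forall>x\<in>C. \<forall>y\<in>C. f (x + y) = f x + f y) \<and>
     (\<forall>r. \<forall>x\<in>C. f (act r x) = act' r (f x))"

definition homogeneous_map :: "'a set \<Rightarrow> (int \<Rightarrow> 'a set) \<Rightarrow> (int \<Rightarrow> 'b set) \<Rightarrow> ('a \<Rightarrow> 'b) \<Rightarrow> bool" where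
  "homogeneous_map C G G' f \<longleftrightarrow> (\<forall>n. \<forall>x\<in>C \<inter> G n. f x \<in> G' n)"

definition torsion_elem :: "(int \<Rightarrow> 'r::ring_1 set) \<Rightarrow> ('r \<Rightarrow> 'a::ab_group_add \<Rightarrow> 'a) \<Rightarrow> 'a \<Rightarrow> bool" where
  "torsion_elem Rg act x \<longleftrightarrow> (\<exists>n t. \<forall>a\<in>ideal_pow (Rge Rg t) n. act a x = 0)"

text \<open>x is torsion modulo the submodule N, i.e. its class in C/N is torsion.\<close>
definition torsion_mod :: "(int \<Rightarrow> 'r::ring_1 set) \<Rightarrow> ('r \<Rightarrow> 'a::ab_group_add \<Rightarrow> 'a) \<Rightarrow> 'a set \<Rightarrow> 'a \<Rightarrow> bool" where
  "torsion_mod Rg act N x \<longleftrightarrow> (\<exists>n t. \<forall>a\<in>ideal_pow (Rge Rg t) n. act a x \<in> N)"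

definition left_ore_set :: "'r::ring_1 set \<Rightarrow> bool" where
  "left_ore_set S \<longleftrightarrow> 1 \<in> S \<and> 0 \<notin> S \<and> (\<forall>s\<in>S. \<forall>s'\<in>S. s * s' \<in> S) \<and>
     (\<forall>s\<in>S. \<forall>r. \<exists>u v. v \<in> S \<and> u * s = v * r)"

definition good_ore_set :: "(int \<Rightarrow> 'r::ring_1 set) \<Rightarrow> 'r set \<Rightarrow> bool" where
  "good_ore_set Rg S \<longleftrightarrow> left_ore_set S \<and> S \<subseteq> Rpp_all Rg \<and>
     (\<forall>s\<in>S. \<forall>r\<in>Rp_all Rg. \<exists>u\<in>Rp_all Rg. \<exists>v\<in>S. u * s = v * r)"

definition schematic :: "(int \<Rightarrow> 'r::ring_1 set) \<Rightarrow> bool" where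
  "schematic Rg \<longleftrightarrow> pos_sg_ring Rg \<and>
     (\<forall>I :: nat \<Rightarrow> 'r set. (\<forall>i. left_ideal (I i)) \<and> (\<forall>i. I i \<subseteq> I (Suc i))
         \<longrightarrow> (\<exists>n. \<forall>m\<ge>n. I m = I n)) \<and>
     (\<exists>\<I> :: 'r set set. finite \<I> \<and>
        (\<forall>S\<in>\<I>. good_ore_set Rg S \<and> S \<inter> graded_span Rg (\<lambda>k. k \<ge> 1) \<noteq> {}) \<and>
        (\<forall>x :: 'r set \<Rightarrow> 'r. (\<forall>S\<in>\<I>. x S \<in> S) \<longrightarrow>
           (\<exists>t m. ideal_pow (Rge Rg t) m \<subseteq> {\<Sum>S\<in>\<I>. r S * x S | r. True})))"

text \<open>T-injectivity of (Qc, Qact) with respect to all R-modules whose carrier lives in the type 'n.\<close>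
definition T_injective :: "'n::ab_group_add itself \<Rightarrow> (int \<Rightarrow> 'r::ring_1 set) \<Rightarrow> 'q::ab_group_add set
    \<Rightarrow> ('r \<Rightarrow> 'q \<Rightarrow> 'q) \<Rightarrow> bool" where
  "T_injective (_ :: 'n itself) Rg Qc Qact \<longleftrightarrow>
     (\<forall>(C :: 'n set) act N f. lmodule C act \<and> submodule C act N \<and> (\<forall>x\<in>C. torsion_mod Rg act N x)
        \<and> is_hom N act Qc Qact f \<longrightarrow> (\<exists>g. is_hom C act Qc Qact g \<and> (\<forall>x\<in>N. g x = f x)))"

text \<open>(Qc, Qact) together with iota is a module of quotients of (Mc, Mact): iota induces an
  embedding of M' = M/T(M) into Q; Q is torsion-free, T-injective, and Q/M' is torsion.\<close>
definition module_of_quotients :: "'n::ab_group_add itself \<Rightarrow> (int \<Rightarrow> 'r::ring_1 set)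
    \<Rightarrow> 'm::ab_group_add set \<Rightarrow> ('r \<Rightarrow> 'm \<Rightarrow> 'm) \<Rightarrow> 'q::ab_group_add set \<Rightarrow> ('r \<Rightarrow> 'q \<Rightarrow> 'q)
    \<Rightarrow> ('m \<Rightarrow> 'q) \<Rightarrow> bool" where
  "module_of_quotients tn Rg Mc Mact Qc Qact iota \<longleftrightarrow>
     lmodule Qc Qact \<and> is_hom Mc Mact Qc Qact iota \<and>
     (\<forall>x\<in>Mc. iota x = 0 \<longleftrightarrow> torsion_elem Rg Mact x) \<and>
     (\<forall>\<xi>\<in>Qc. torsion_elem Rg Qact \<xi> \<longrightarrow> \<xi> = 0) \<and>
     T_injective tn Rg Qc Qact \<and>
     (\<forall>\<xi>\<in>Qc. torsion_mod Rg Qact (iota ` Mc) \<xi>)"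

text \<open>The semi-graduation of Q(M): component of degree k. M' carries the grading
  (M')_j = iota ` (M_j) induced from M.\<close>
definition Q_grading :: "(int \<Rightarrow> 'r::ring_1 set) \<Rightarrow> 'm::ab_group_add set \<Rightarrow> (int \<Rightarrow> 'm set)
    \<Rightarrow> 'q::ab_group_add set \<Rightarrow> ('r \<Rightarrow> 'q \<Rightarrow> 'q) \<Rightarrow> ('m \<Rightarrow> 'q) \<Rightarrow> int \<Rightarrow> 'q set" where
  "Q_grading Rg Mc Mg Qc Qact iota k = {\<xi> \<in> Qc. \<exists>n t.
      (\<forall>a\<in>ideal_pow (Rge Rg n) t. Qact a \<xi> \<in> iota ` Mc) \<and>
      (\<forall>d. \<forall>s\<in>ideal_pow (Rge Rg n) t \<inter> Rp Rg d. Qact s \<xi> \<in> iota ` Mg (k + d))}"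

end

theory Submission
  imports Defs
begin

lemma asg_sum: "add_subgroup A \<Longrightarrow> (\<forall>i\<in>F. w i \<in> A) \<Longrightarrow> sum w F \<in> A"
proof (induction F rule: infinite_finite_induct)
  case (infinite F) then show ?case by (simp add: add_subgroup_def)
next
  case empty then show ?case by (simp add: add_subgroup_def)
next
  case (insert x F) then show ?case by (simp add: add_subgroup_def)
qed

lemma asg_diff: "add_subgroup A \<Longrightarrow> x \<in> A \<Longrightarrow> y \<in> A \<Longrightarrow> x - y \<in> A"
  unfolding add_subgroup_def by (metis diff_conv_add_uminus)

lemma lm_zero_in: "lmodule C act \<Longrightarrow> 0 \<in> C"
  unfolding lmodule_def add_subgroup_def by blast

lemma lm_act_zero_left: "lmodule C act \<Longrightarrow> y \<in> C \<Longrightarrow> act 0 y = 0"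
proof -
  assume l: "lmodule C act" and y: "y \<in> C"
  have "act (0 + 0) y = act 0 y + act 0 y" using l y unfolding lmodule_def by blast
  then show ?thesis by simp
qed

lemma lm_act_zero_right: "lmodule C act \<Longrightarrow> act r 0 = 0"
proof -
  assume l: "lmodule C act"
  have z: "0 \<in> C" using lm_zero_in[OF l] .
  have "act r (0 + 0) = act r 0 + act r 0" using l z unfolding lmodule_def by blast
  then show ?thesis by simp
qed

lemma lm_act_sum_left: "lmodule C act \<Longrightarrow> y \<in> C \<Longrightarrow> act (sum h A) y = (\<Sum>i\<in>A. act (h i) y)"
proof (induction A rule: infinite_finite_induct)
  case (infinite A) then show ?case using lm_act_zero_left by simp
next
  case empty then show ?case using lm_act_zero_left by simp
next
  case (insert x F) then show ?case unfolding lmodule_def by simp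
qed

lemma lm_act_sum_right: "lmodule C act \<Longrightarrow> (\<forall>i\<in>A. w i \<in> C) \<Longrightarrow> act r (sum w A) = (\<Sum>i\<in>A. act r (w i))"
proof (induction A rule: infinite_finite_induct)
  case (infinite A) then show ?case using lm_act_zero_right by simp
next
  case empty then show ?case using lm_act_zero_right by simp
next
  case (insert x F)
  have "sum w F \<in> C" using insert asg_sum[where A=C and w=w and F=F] unfolding lmodule_def by blast
  then show ?case using insert unfolding lmodule_def by simp
qed

lemma lm_act_diff: "lmodule C act \<Longrightarrow> x \<in> C \<Longrightarrow> y \<in> C \<Longrightarrow> act r (x - y) = act r x - act r y"
proof -
  assume l: "lmodule C act" and x: "x \<in> C" and y: "y \<in> C"
  have ny: "- y \<in> C" using l y unfolding lmodule_def add_subgroup_def by blast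
  have "act r (y + - y) = act r y + act r (- y)" using l y ny unfolding lmodule_def by blast
  then have "act r (- y) = - act r y" using lm_act_zero_right[OF l] by (metis neg_eq_iff_add_eq_0)
  moreover have "act r (x + - y) = act r x + act r (- y)" using l x ny unfolding lmodule_def by blast
  ultimately show ?thesis by simp
qed

lemma hom_zero: "is_hom C act C' act' f \<Longrightarrow> lmodule C act \<Longrightarrow> f 0 = 0"
proof -
  assume h: "is_hom C act C' act' f" and l: "lmodule C act"
  have "f (0 + 0) = f 0 + f 0" using h lm_zero_in[OF l] unfolding is_hom_def by blast
  then show ?thesis by simp
qed

lemma hom_diff: "is_hom C act C' act' f \<Longrightarrow> lmodule C act \<Longrightarrow> x \<in> C \<Longrightarrow> y \<in> C \<Longrightarrow> f (x - y) = f x - f y"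
proof -
  assume h: "is_hom C act C' act' f" and l: "lmodule C act" and x: "x \<in> C" and y: "y \<in> C"
  have ny: "- y \<in> C" using l y unfolding lmodule_def add_subgroup_def by blast
  have "f (y + - y) = f y + f (- y)" using h y ny unfolding is_hom_def by blast
  then have "f (- y) = - f y" using hom_zero[OF h l] by (metis neg_eq_iff_add_eq_0)
  moreover have "f (x + - y) = f x + f (- y)" using h x ny unfolding is_hom_def by blast
  ultimately show ?thesis by simp
qed

lemma dg_zero:
  assumes dg: "direct_grading C G" and F: "finite F" and w: "\<forall>j\<in>F. w j \<in> G j"
    and s: "sum w F = 0" and j: "j \<in> F"
  shows "w j = 0"
proof -
  have sg: "\<And>n. add_subgroup (G n) \<and> G n \<subseteq> C" using dg unfolding direct_grading_def by blast
  have z0: "\<And>n. 0 \<in> G n" using sg unfolding add_subgroup_def by blast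
  have z: "0 \<in> C" using sg z0 by blast
  define P where "P = (\<lambda>c. finite {n. c n \<noteq> 0} \<and> (\<forall>n. c n \<in> G n) \<and> (0::'a) = sum c {n. c n \<noteq> 0})"
  have "\<forall>x\<in>C. \<exists>!c. finite {n. c n \<noteq> 0} \<and> (\<forall>n. c n \<in> G n) \<and> x = sum c {n. c n \<noteq> 0}"
    using dg unfolding direct_grading_def by (elim conjE)
  then have ex1: "\<exists>!c. P c" using z unfolding P_def by (rule bspec)
  define c where "c e = (if e \<in> F then w e else 0)" for e
  have sub: "{n. c n \<noteq> 0} \<subseteq> F" unfolding c_def by auto
  have "finite {n. c n \<noteq> 0}" using sub F finite_subset by blast
  moreover have "\<forall>n. c n \<in> G n" using w z0 unfolding c_def by auto
  moreover have "sum c {n. c n \<noteq> 0} = sum c F"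
    using sum.mono_neutral_right[OF F sub, of c] by auto
  moreover have "sum c F = sum w F" unfolding c_def by simp
  ultimately have Pc: "P c" using s unfolding P_def by simp
  have P0: "P (\<lambda>_. 0)" using z0 unfolding P_def by simp
  obtain c0 where "\<forall>y. P y \<longrightarrow> y = c0" using ex1 by (elim ex1E) blast
  then have "c = (\<lambda>_. 0)" using Pc P0 by metis
  then have "c j = 0" by simp
  then show ?thesis using j unfolding c_def by simp
qed

lemma dg_zero_shift:
  assumes dg: "direct_grading C G" and F: "finite F" and w: "\<forall>j\<in>F. w j \<in> G (D + j)"
    and s: "sum w F = 0" and j: "j \<in> F"
  shows "w j = 0"
proof -
  define w' where "w' e = w (e - D)" for e
  have inj: "inj_on (\<lambda>j. D + j) F" by (simp add: inj_on_def)
  have "sum w' ((\<lambda>j. D + j) ` F) = sum (w' \<circ> (\<lambda>j. D + j)) F" using sum.reindex[OF inj] .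
  also have "\<dots> = sum w F" unfolding w'_def by (simp add: comp_def)
  finally have s': "sum w' ((\<lambda>j. D + j) ` F) = 0" using s by simp
  have w': "\<forall>e\<in>(\<lambda>j. D + j) ` F. w' e \<in> G e" using w unfolding w'_def by auto
  have "w' (D + j) = 0" using dg_zero[OF dg finite_imageI[OF F] w' s'] j by blast
  then show ?thesis unfolding w'_def by simp
qed

lemma add_span_mono: "A \<subseteq> B \<Longrightarrow> add_span A \<subseteq> add_span B"
  unfolding add_span_def by blast

lemma set_prod_mono: "A \<subseteq> A' \<Longrightarrow> B \<subseteq> B' \<Longrightarrow> set_prod A B \<subseteq> set_prod A' B'"
  unfolding set_prod_def by (rule add_span_mono) blast

lemma ideal_pow_mono: "I \<subseteq> J \<Longrightarrow> ideal_pow I n \<subseteq> ideal_pow J n"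
proof (induction n)
  case 0 then show ?case by simp
next
  case (Suc n)
  have ih: "ideal_pow I n \<subseteq> ideal_pow J n" using Suc by simp
  have "set_prod I (ideal_pow I n) \<subseteq> set_prod J (ideal_pow J n)" using Suc.prems ih by (rule set_prod_mono)
  then show ?case by simp
qed

lemma ideal_pow_Suc_sub: "ideal_pow I (Suc n) \<subseteq> ideal_pow I n"
proof (induction n)
  case 0 then show ?case by simp
next
  case (Suc n)
  have "set_prod I (ideal_pow I (Suc n)) \<subseteq> set_prod I (ideal_pow I n)"
    using Suc by (intro set_prod_mono) auto
  then show ?case by simp
qed

lemma ideal_pow_antimono: "n \<le> n' \<Longrightarrow> ideal_pow I n' \<subseteq> ideal_pow I n"
  using lift_Suc_antimono_le[of "ideal_pow I"] ideal_pow_Suc_sub by blast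

lemma graded_span_mono: "(\<And>k. P k \<Longrightarrow> Q k) \<Longrightarrow> graded_span G P \<subseteq> graded_span G Q"
  unfolding graded_span_def by blast

lemma Rge_antimono: "t \<le> t' \<Longrightarrow> Rge Rg t' \<subseteq> Rge Rg t"
proof -
  assume "t \<le> t'"
  then have "graded_span Rg (\<lambda>k. k \<ge> int t') \<subseteq> graded_span Rg (\<lambda>k. k \<ge> int t)"
    by (intro graded_span_mono) simp
  then show ?thesis unfolding Rge_def by blast
qed

lemma ideal_pow_Rge_anti: "t \<le> t' \<Longrightarrow> n \<le> n' \<Longrightarrow> ideal_pow (Rge Rg t') n' \<subseteq> ideal_pow (Rge Rg t) n"
  using ideal_pow_antimono[of n n' "Rge Rg t'"] ideal_pow_mono[OF Rge_antimono[of t t' Rg], of n] by blast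

lemma pow_in_ideal_pow: "u \<in> I \<Longrightarrow> u ^ t \<in> ideal_pow I t"
proof (induction t)
  case 0 then show ?case by simp
next
  case (Suc t)
  have "u * u ^ t = sum_list [u * u ^ t]" by simp
  then have "u * u ^ t \<in> add_span {a * b |a b. a \<in> I \<and> b \<in> ideal_pow I t}"
    unfolding add_span_def using Suc by (intro CollectI exI[of _ "[u * u ^ t]"]) auto
  then show ?case by (simp add: set_prod_def)
qed

lemma Rg_sub_Rge: "x \<in> Rg e \<Longrightarrow> e \<ge> int n \<Longrightarrow> x \<in> Rge Rg n"
proof -
  assume x: "x \<in> Rg e" and e: "e \<ge> int n"
  have "x = sum (\<lambda>_. x) {e}" by simp
  then have "x \<in> graded_span Rg (\<lambda>k. k \<ge> int n)"
    unfolding graded_span_def using x e by (intro CollectI exI[of _ "{e}"] exI[of _ "\<lambda>_. x"]) auto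
  then show ?thesis unfolding Rge_def by blast
qed

lemma Rp_pow: "s \<in> Rp Rg d \<Longrightarrow> 1 \<in> Rg 0 \<Longrightarrow> s ^ N \<in> Rp Rg (int N * d)"
proof (induction N)
  case 0 then show ?case unfolding Rp_def by simp
next
  case (Suc N)
  have e: "int (Suc N) * d = d + int N * d" by (simp add: algebra_simps)
  have sN: "s ^ N \<in> Rg (int N * d)" and sNh: "\<forall>m. \<forall>h\<in>Rg m. s ^ N * h \<in> Rg (int N * d + m)"
    using Suc unfolding Rp_def by auto
  have sd: "\<forall>m. \<forall>h\<in>Rg m. s * h \<in> Rg (d + m)" using Suc.prems unfolding Rp_def by auto
  have 1: "s * s ^ N \<in> Rg (d + int N * d)" using sd sN by blast
  have 2: "\<forall>m. \<forall>h\<in>Rg m. s * s ^ N * h \<in> Rg (d + int N * d + m)"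
  proof (intro allI ballI)
    fix m h assume "h \<in> Rg m"
    then have "s * (s ^ N * h) \<in> Rg (d + (int N * d + m))" using sd sNh by blast
    then show "s * s ^ N * h \<in> Rg (d + int N * d + m)" by (simp add: mult.assoc add.assoc)
  qed
  show ?case unfolding e Rp_def using 1 2 by simp
qed

lemma ore_pow: "left_ore_set S \<Longrightarrow> s \<in> S \<Longrightarrow> s ^ N \<in> S"
  by (induction N) (auto simp: left_ore_set_def)

lemma K1:
  assumes sg: "sg_ring Rg" and good: "good_ore_set Rg S"
    and ne: "S \<inter> graded_span Rg (\<lambda>k. k \<ge> 1) \<noteq> {}"
  shows "\<exists>\<tau> D. \<tau> \<in> S \<and> \<tau> \<in> Rp Rg D \<and> \<tau> \<in> ideal_pow (Rge Rg n) t"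
proof -
  obtain s0 where s0S: "s0 \<in> S" and s0g: "s0 \<in> graded_span Rg (\<lambda>k. k \<ge> 1)" using ne by blast
  have ore: "left_ore_set S" using good unfolding good_ore_set_def by blast
  have "s0 \<in> Rpp_all Rg" using good s0S unfolding good_ore_set_def by blast
  then obtain d0 where "s0 \<in> Rpp Rg d0" unfolding Rpp_all_def by blast
  then have s0p: "s0 \<in> Rp Rg d0" unfolding Rpp_def by blast
  then have s0d: "s0 \<in> Rg d0" unfolding Rp_def by blast
  have nz: "s0 \<noteq> 0" using ore s0S unfolding left_ore_set_def by blast
  have dg: "direct_grading UNIV Rg" and one: "1 \<in> Rg 0" using sg unfolding sg_ring_def by auto
  have d0: "d0 \<ge> 1"
  proof (rule ccontr)
    assume nd: "\<not> d0 \<ge> 1"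
    obtain F c where F: "finite F" and Fc: "\<forall>k\<in>F. 1 \<le> k \<and> c k \<in> Rg k" and sc: "s0 = sum c F"
      using s0g unfolding graded_span_def by blast
    have dF: "d0 \<notin> F" using Fc nd by auto
    define w where "w = c(d0 := - s0)"
    have neg: "- s0 \<in> Rg d0" using dg s0d unfolding direct_grading_def add_subgroup_def by blast
    have wF: "\<forall>j\<in>insert d0 F. w j \<in> Rg j" using Fc neg dF unfolding w_def by auto
    have "sum w F = sum c F" unfolding w_def using dF by (intro sum.cong) auto
    then have "sum w (insert d0 F) = 0" using F dF sc unfolding w_def by (simp add: sum.insert)
    then have "w d0 = 0" using dg_zero[OF dg finite.insertI[OF F] wF] by blast
    then show False using nz unfolding w_def by simp
  qed
  have "s0 ^ n \<in> Rp Rg (int n * d0)" using Rp_pow[OF s0p one] .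
  then have a: "s0 ^ n \<in> Rg (int n * d0)" unfolding Rp_def by blast
  have "int n * d0 \<ge> int n" using d0 by (simp add: mult_le_cancel_left1)
  then have "s0 ^ n \<in> Rge Rg n" using Rg_sub_Rge[of "s0 ^ n" Rg "int n * d0" n] a by blast
  then have i: "(s0 ^ n) ^ t \<in> ideal_pow (Rge Rg n) t" by (rule pow_in_ideal_pow)
  have p: "(s0 ^ n) ^ t \<in> Rp Rg (int t * (int n * d0))"
    using Rp_pow[OF Rp_pow[OF s0p one] one] .
  have "(s0 ^ n) ^ t \<in> S" using ore_pow[OF ore ore_pow[OF ore s0S]] .
  then show ?thesis using i p by blast
qed

lemma K2:
  assumes l: "lmodule Mc Mact" and y: "y \<in> Mc"
    and H: "\<forall>x :: 'r set \<Rightarrow> 'r::ring_1. (\<forall>S\<in>II. x S \<in> S) \<longrightarrow>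
           (\<exists>t m. ideal_pow (Rge Rg t) m \<subseteq> {\<Sum>S\<in>II. r S * x S | r. True})"
    and k: "\<forall>S\<in>II. \<exists>\<sigma>\<in>S. Mact \<sigma> y = 0"
  shows "torsion_elem Rg Mact y"
proof -
  define x where "x S = (SOME \<sigma>. \<sigma> \<in> S \<and> Mact \<sigma> y = 0)" for S
  have xS: "\<forall>S\<in>II. x S \<in> S \<and> Mact (x S) y = 0"
  proof
    fix S assume "S \<in> II"
    then have "\<exists>\<sigma>. \<sigma> \<in> S \<and> Mact \<sigma> y = 0" using k by blast
    then show "x S \<in> S \<and> Mact (x S) y = 0" unfolding x_def by (rule someI_ex)
  qed
  then have xS1: "\<forall>S\<in>II. x S \<in> S" by blast
  have "\<exists>t m. ideal_pow (Rge Rg t) m \<subseteq> {\<Sum>S\<in>II. r S * x S | r. True}"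
    using spec[OF H, of x] xS1 by (rule mp)
  then obtain t m where tm: "ideal_pow (Rge Rg t) m \<subseteq> {\<Sum>S\<in>II. r S * x S | r. True}"
    by blast
  have "\<forall>a\<in>ideal_pow (Rge Rg t) m. Mact a y = 0"
  proof
    fix a assume "a \<in> ideal_pow (Rge Rg t) m"
    then obtain r where a: "a = (\<Sum>S\<in>II. r S * x S)" using tm by blast
    have "Mact a y = (\<Sum>S\<in>II. Mact (r S * x S) y)" unfolding a using lm_act_sum_left[OF l y] .
    also have "\<dots> = (\<Sum>S\<in>II. Mact (r S) (Mact (x S) y))"
    proof (rule sum.cong)
      fix S show "Mact (r S * x S) y = Mact (r S) (Mact (x S) y)"
        using l y by (simp add: lmodule_def)
    qed simp
    also have "\<dots> = 0" using xS lm_act_zero_right[OF l] by (intro sum.neutral) simp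
    finally show "Mact a y = 0" .
  qed
  then show ?thesis unfolding torsion_elem_def by blast
qed

lemma Tprime:
  assumes lsg: "lsg_module Rg Mc Mact Mg" and F: "finite F" and w: "\<forall>j\<in>F. w j \<in> Mg (E + j)"
    and tor: "torsion_elem Rg Mact (sum w F)"
    and k1: "\<forall>n t. \<exists>\<tau> D. \<tau> \<in> S \<and> \<tau> \<in> Rp Rg D \<and> \<tau> \<in> ideal_pow (Rge Rg n) t"
  shows "\<exists>\<tau>\<in>S. \<forall>j\<in>F. Mact \<tau> (w j) = 0"
proof -
  have l: "lmodule Mc Mact" and dg: "direct_grading Mc Mg"
    and act: "\<forall>n m. \<forall>r\<in>Rp Rg n. \<forall>x\<in>Mg m. Mact r x \<in> Mg (n + m)"
    using lsg unfolding lsg_module_def sg_module_def by auto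
  have sub: "\<And>n. Mg n \<subseteq> Mc" using dg unfolding direct_grading_def by blast
  obtain n t where nt: "\<forall>a\<in>ideal_pow (Rge Rg t) n. Mact a (sum w F) = 0"
    using tor unfolding torsion_elem_def by blast
  obtain \<tau> D where \<tau>: "\<tau> \<in> S" "\<tau> \<in> Rp Rg D" "\<tau> \<in> ideal_pow (Rge Rg t) n" using k1 by blast
  have wC: "\<forall>j\<in>F. w j \<in> Mc" using w sub by blast
  have "(\<Sum>j\<in>F. Mact \<tau> (w j)) = 0" using nt \<tau>(3) lm_act_sum_right[OF l wC] by simp
  moreover have "\<forall>j\<in>F. Mact \<tau> (w j) \<in> Mg ((D + E) + j)"
    using act \<tau>(2) w by (simp add: add.assoc)
  ultimately have "\<forall>j\<in>F. Mact \<tau> (w j) = 0"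
    using dg_zero_shift[OF dg F, of "\<lambda>j. Mact \<tau> (w j)" "D + E"] by blast
  then show ?thesis using \<tau>(1) by blast
qed

lemma lm_diff_in: "lmodule C act \<Longrightarrow> x \<in> C \<Longrightarrow> y \<in> C \<Longrightarrow> x - y \<in> C"
  unfolding lmodule_def using asg_diff by blast

lemma lm_act_in: "lmodule C act \<Longrightarrow> x \<in> C \<Longrightarrow> act r x \<in> C"
  unfolding lmodule_def by blast

lemma lm_act_mult: "lmodule C act \<Longrightarrow> x \<in> C \<Longrightarrow> act (r * s) x = act r (act s x)"
  unfolding lmodule_def by blast

lemma ore_mult: "left_ore_set S \<Longrightarrow> a \<in> S \<Longrightarrow> b \<in> S \<Longrightarrow> a * b \<in> S"
  unfolding left_ore_set_def by blast

lemma hom_act: "is_hom C act C' act' f \<Longrightarrow> x \<in> C \<Longrightarrow> f (act r x) = act' r (f x)"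
  unfolding is_hom_def by blast

lemma LemA:
  assumes lsg: "lsg_module Rg Mc Mact Mg"
    and ih: "is_hom Mc Mact Qc Qact iota"
    and tz: "\<forall>x\<in>Mc. iota x = 0 \<longleftrightarrow> torsion_elem Rg Mact x"
    and k1: "\<forall>S\<in>II. \<forall>n t. \<exists>\<tau> D. \<tau> \<in> S \<and> \<tau> \<in> Rp Rg D \<and> \<tau> \<in> ideal_pow (Rge Rg n) t"
    and ore: "\<forall>S\<in>II. left_ore_set S"
    and H: "\<forall>x :: 'r set \<Rightarrow> 'r::ring_1. (\<forall>S\<in>II. x S \<in> S) \<longrightarrow>
           (\<exists>t m. ideal_pow (Rge Rg t) m \<subseteq> {\<Sum>S\<in>II. r S * x S | r. True})"
    and eta: "\<eta> \<in> iota ` Mc" and etag: "\<eta> \<in> Q_grading Rg Mc Mg Qc Qact iota k"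
  shows "\<eta> \<in> iota ` Mg k"
proof -
  have l: "lmodule Mc Mact" and dg: "direct_grading Mc Mg"
    and act: "\<forall>n m. \<forall>r\<in>Rp Rg n. \<forall>x\<in>Mg m. Mact r x \<in> Mg (n + m)"
    using lsg unfolding lsg_module_def sg_module_def by auto
  have sub: "\<And>n. Mg n \<subseteq> Mc" and sgp: "\<And>n. add_subgroup (Mg n)" using dg unfolding direct_grading_def by blast+
  obtain m where m: "m \<in> Mc" and em: "\<eta> = iota m" using eta by blast
  obtain n3 t3 where H3: "\<forall>d. \<forall>s\<in>ideal_pow (Rge Rg n3) t3 \<inter> Rp Rg d. Qact s \<eta> \<in> iota ` Mg (k + d)"
    using etag unfolding Q_grading_def by blast
  have "\<forall>x\<in>Mc. \<exists>!c. finite {n. c n \<noteq> 0} \<and> (\<forall>n. c n \<in> Mg n) \<and> x = sum c {n. c n \<noteq> 0}"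
    using dg unfolding direct_grading_def by (elim conjE)
  then have "\<exists>!c. finite {n. c n \<noteq> 0} \<and> (\<forall>n. c n \<in> Mg n) \<and> m = sum c {n. c n \<noteq> 0}"
    using m by (rule bspec)
  then obtain c where cfin: "finite {n. c n \<noteq> 0}" and cg: "\<forall>n. c n \<in> Mg n"
    and mc0: "m = sum c {n. c n \<noteq> 0}" by (elim ex1E) blast
  define F where "F = insert k {n. c n \<noteq> 0}"
  have F: "finite F" unfolding F_def using cfin by simp
  have kF: "k \<in> F" unfolding F_def by simp
  have sub0: "{n. c n \<noteq> 0} \<subseteq> F" unfolding F_def by blast
  have "sum c F = sum c {n. c n \<noteq> 0}" by (rule sum.mono_neutral_right[OF F sub0]) simp
  then have mc: "m = sum c F" using mc0 by simp
  have cC: "\<forall>j\<in>A. c j \<in> Mc" for A using cg sub by blast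
  have mk: "m - c k = sum c (F - {k})" using sum.remove[OF F kF, of c] mc by simp
  have mkC: "m - c k \<in> Mc" using lm_diff_in[OF l m] cC[of F] kF by blast
  have "torsion_elem Rg Mact (m - c k)"
  proof (rule K2[OF l mkC H])
    show "\<forall>S\<in>II. \<exists>\<sigma>\<in>S. Mact \<sigma> (m - c k) = 0"
    proof
      fix S assume S: "S \<in> II"
      obtain \<sigma> D where \<sigma>: "\<sigma> \<in> S" "\<sigma> \<in> Rp Rg D" "\<sigma> \<in> ideal_pow (Rge Rg n3) t3"
        using k1 S by blast
      have "Qact \<sigma> \<eta> \<in> iota ` Mg (k + D)" using H3 \<sigma> by blast
      then obtain y where y: "y \<in> Mg (k + D)" and qy: "Qact \<sigma> \<eta> = iota y" by blast
      have yC: "y \<in> Mc" using y sub by blast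
      have sm: "Mact \<sigma> m \<in> Mc" using lm_act_in[OF l m] .
      have "Qact \<sigma> \<eta> = iota (Mact \<sigma> m)" using hom_act[OF ih m] em by simp
      then have "iota (Mact \<sigma> m - y) = 0" using qy hom_diff[OF ih l sm yC] by simp
      moreover have "Mact \<sigma> m - y \<in> Mc" using lm_diff_in[OF l sm yC] .
      ultimately have tor: "torsion_elem Rg Mact (Mact \<sigma> m - y)" using tz by blast
      define w where "w j = Mact \<sigma> (c j) - (if j = k then y else 0)" for j
      have "sum w F = (\<Sum>j\<in>F. Mact \<sigma> (c j)) - (\<Sum>j\<in>F. if j = k then y else 0)"
        unfolding w_def by (rule sum_subtractf)
      also have "(\<Sum>j\<in>F. if j = k then y else 0) = y" using F kF by simp
      also have "(\<Sum>j\<in>F. Mact \<sigma> (c j)) = Mact \<sigma> m" using lm_act_sum_right[OF l cC[of F]] mc by simp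
      finally have sw: "sum w F = Mact \<sigma> m - y" .
      have wg: "\<forall>j\<in>F. w j \<in> Mg (D + j)"
      proof
        fix j assume "j \<in> F"
        have a: "Mact \<sigma> (c j) \<in> Mg (D + j)" using act \<sigma>(2) cg by blast
        show "w j \<in> Mg (D + j)"
        proof (cases "j = k")
          case True
          then have "y \<in> Mg (D + j)" using y by (simp add: add.commute)
          then show ?thesis unfolding w_def using True a asg_diff[OF sgp] by simp
        next
          case False then show ?thesis unfolding w_def using a by simp
        qed
      qed
      have k1S: "\<forall>n t. \<exists>\<tau> D. \<tau> \<in> S \<and> \<tau> \<in> Rp Rg D \<and> \<tau> \<in> ideal_pow (Rge Rg n) t"
        using k1 S by blast
      have torw: "torsion_elem Rg Mact (sum w F)" using tor sw by simp
      obtain \<tau> where \<tau>S: "\<tau> \<in> S" and \<tau>0: "\<forall>j\<in>F. Mact \<tau> (w j) = 0"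
        using Tprime[OF lsg F wg torw k1S] by blast
      have ts: "\<tau> * \<sigma> \<in> S" using ore_mult ore S \<tau>S \<sigma>(1) by blast
      have sC: "\<forall>j\<in>F - {k}. Mact \<sigma> (c j) \<in> Mc" using lm_act_in[OF l] cC[of F] by blast
      have "Mact (\<tau> * \<sigma>) (m - c k) = Mact \<tau> (Mact \<sigma> (sum c (F - {k})))"
        using lm_act_mult[OF l mkC] mk by simp
      also have "\<dots> = Mact \<tau> (\<Sum>j\<in>F - {k}. Mact \<sigma> (c j))"
        using lm_act_sum_right[OF l cC[of "F - {k}"]] by simp
      also have "\<dots> = (\<Sum>j\<in>F - {k}. Mact \<tau> (Mact \<sigma> (c j)))"
        using lm_act_sum_right[OF l sC] by simp
      also have "\<dots> = 0"
      proof (rule sum.neutral, rule ballI)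
        fix j assume j: "j \<in> F - {k}"
        then have "w j = Mact \<sigma> (c j)" unfolding w_def by simp
        then show "Mact \<tau> (Mact \<sigma> (c j)) = 0" using \<tau>0 j by auto
      qed
      finally show "\<exists>\<sigma>\<in>S. Mact \<sigma> (m - c k) = 0" using ts by blast
    qed
  qed
  then have "iota (m - c k) = 0" using tz mkC by blast
  then have "iota m = iota (c k)" using hom_diff[OF ih l m] cC[of F] kF by auto
  then show ?thesis using em cg by blast
qed

theorem mainTheorem8:
  fixes Rg :: "int \<Rightarrow> 'r::ring_1 set"
    and Mc :: "'m::ab_group_add set" and Mact :: "'r \<Rightarrow> 'm \<Rightarrow> 'm" and Mg :: "int \<Rightarrow> 'm set"
    and Qc :: "'q::ab_group_add set" and Qact :: "'r \<Rightarrow> 'q \<Rightarrow> 'q" and iota :: "'m \<Rightarrow> 'q"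
    and Nc :: "'n::ab_group_add set" and Nact :: "'r \<Rightarrow> 'n \<Rightarrow> 'n" and Ng :: "int \<Rightarrow> 'n set"
    and N' :: "'n set" and f :: "'n \<Rightarrow> 'q"
  assumes "schematic Rg"
    and "lsg_module Rg Mc Mact Mg"
    and "module_of_quotients TYPE('n) Rg Mc Mact Qc Qact iota"
    and "lsg_module Rg Nc Nact Ng"
    and "sg_submodule Nc Nact Ng N'"
    and "\<forall>x\<in>Nc. torsion_mod Rg Nact N' x"
    and "is_hom N' Nact Qc Qact f"
    and "homogeneous_map N' Ng (Q_grading Rg Mc Mg Qc Qact iota) f"
  shows "(\<exists>g. is_hom Nc Nact Qc Qact g \<and> homogeneous_map Nc Ng (Q_grading Rg Mc Mg Qc Qact iota) g
              \<and> (\<forall>x\<in>N'. g x = f x))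
       \<and> (\<forall>g1 g2. is_hom Nc Nact Qc Qact g1 \<and> homogeneous_map Nc Ng (Q_grading Rg Mc Mg Qc Qact iota) g1
              \<and> (\<forall>x\<in>N'. g1 x = f x) \<and>
              is_hom Nc Nact Qc Qact g2 \<and> homogeneous_map Nc Ng (Q_grading Rg Mc Mg Qc Qact iota) g2
              \<and> (\<forall>x\<in>N'. g2 x = f x) \<longrightarrow> (\<forall>x\<in>Nc. g1 x = g2 x))"
proof -
  note sch = assms(1) and lsgM = assms(2) and mq = assms(3) and lsgN = assms(4)
    and subN = assms(5) and torN = assms(6) and homf = assms(7) and hgf = assms(8)
  have sg: "sg_ring Rg" using sch unfolding schematic_def pos_sg_ring_def by blast
  have "\<exists>II :: 'r set set. finite II \<and>
        (\<forall>S\<in>II. good_ore_set Rg S \<and> S \<inter> graded_span Rg (\<lambda>k. k \<ge> 1) \<noteq> {}) \<and>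
        (\<forall>x :: 'r set \<Rightarrow> 'r. (\<forall>S\<in>II. x S \<in> S) \<longrightarrow>
           (\<exists>t m. ideal_pow (Rge Rg t) m \<subseteq> {\<Sum>S\<in>II. r S * x S | r. True}))"
    using sch unfolding schematic_def by (elim conjE)
  then obtain II :: "'r set set" where goodII: "\<forall>S\<in>II. good_ore_set Rg S \<and> S \<inter> graded_span Rg (\<lambda>k. k \<ge> 1) \<noteq> {}"
    and H: "\<forall>x :: 'r set \<Rightarrow> 'r. (\<forall>S\<in>II. x S \<in> S) \<longrightarrow>
           (\<exists>t m. ideal_pow (Rge Rg t) m \<subseteq> {\<Sum>S\<in>II. r S * x S | r. True})"
    by (elim exE conjE)
  have k1: "\<forall>S\<in>II. \<forall>n t. \<exists>\<tau> D. \<tau> \<in> S \<and> \<tau> \<in> Rp Rg D \<and> \<tau> \<in> ideal_pow (Rge Rg n) t"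
  proof (intro ballI allI)
    fix S n t assume "S \<in> II"
    then have "good_ore_set Rg S" "S \<inter> graded_span Rg (\<lambda>k. k \<ge> 1) \<noteq> {}" using goodII by auto
    then show "\<exists>\<tau> D. \<tau> \<in> S \<and> \<tau> \<in> Rp Rg D \<and> \<tau> \<in> ideal_pow (Rge Rg n) t" by (rule K1[OF sg])
  qed
  have ore: "\<forall>S\<in>II. left_ore_set S" using goodII unfolding good_ore_set_def by blast
  have lQ: "lmodule Qc Qact" and ih: "is_hom Mc Mact Qc Qact iota"
    and tz: "\<forall>x\<in>Mc. iota x = 0 \<longleftrightarrow> torsion_elem Rg Mact x"
    and tfree: "\<forall>\<xi>\<in>Qc. torsion_elem Rg Qact \<xi> \<longrightarrow> \<xi> = 0"
    and Tinj: "T_injective TYPE('n) Rg Qc Qact"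
    and qtor: "\<forall>\<xi>\<in>Qc. torsion_mod Rg Qact (iota ` Mc) \<xi>"
    using mq unfolding module_of_quotients_def by blast+
  have lN: "lmodule Nc Nact" and actN: "\<forall>n m. \<forall>r\<in>Rp Rg n. \<forall>x\<in>Ng m. Nact r x \<in> Ng (n + m)"
    using lsgN unfolding lsg_module_def sg_module_def by auto
  have smN: "submodule Nc Nact N'" using subN unfolding sg_submodule_def by blast
  have "\<forall>(C :: 'n set) act N f. lmodule C act \<and> submodule C act N \<and> (\<forall>x\<in>C. torsion_mod Rg act N x)
        \<and> is_hom N act Qc Qact f \<longrightarrow> (\<exists>g. is_hom C act Qc Qact g \<and> (\<forall>x\<in>N. g x = f x))"
    using Tinj unfolding T_injective_def by assumption
  then have "lmodule Nc Nact \<and> submodule Nc Nact N' \<and> (\<forall>x\<in>Nc. torsion_mod Rg Nact N' x)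
        \<and> is_hom N' Nact Qc Qact f \<longrightarrow> (\<exists>g. is_hom Nc Nact Qc Qact g \<and> (\<forall>x\<in>N'. g x = f x))"
    by (elim allE)
  then obtain g where homg: "is_hom Nc Nact Qc Qact g" and gf: "\<forall>x\<in>N'. g x = f x"
    using lN smN torN homf by blast
  have hg: "homogeneous_map Nc Ng (Q_grading Rg Mc Mg Qc Qact iota) g"
    unfolding homogeneous_map_def
  proof (intro allI ballI)
    fix n x assume x: "x \<in> Nc \<inter> Ng n"
    have xC: "x \<in> Nc" using x by blast
    have \<xi>: "g x \<in> Qc" using homg xC unfolding is_hom_def by blast
    obtain n1 t1 where nt1: "\<forall>a\<in>ideal_pow (Rge Rg t1) n1. Nact a x \<in> N'"
      using torN xC unfolding torsion_mod_def by blast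
    obtain n2 t2 where nt2: "\<forall>a\<in>ideal_pow (Rge Rg t2) n2. Qact a (g x) \<in> iota ` Mc"
      using qtor \<xi> unfolding torsion_mod_def by blast
    define T where "T = max t1 t2"
    define P where "P = max n1 n2"
    have I1: "ideal_pow (Rge Rg T) P \<subseteq> ideal_pow (Rge Rg t1) n1"
      unfolding T_def P_def by (rule ideal_pow_Rge_anti) auto
    have I2: "ideal_pow (Rge Rg T) P \<subseteq> ideal_pow (Rge Rg t2) n2"
      unfolding T_def P_def by (rule ideal_pow_Rge_anti) auto
    have A: "\<forall>a\<in>ideal_pow (Rge Rg T) P. Qact a (g x) \<in> iota ` Mc" using I2 nt2 by blast
    have B: "\<forall>d. \<forall>s\<in>ideal_pow (Rge Rg T) P \<inter> Rp Rg d. Qact s (g x) \<in> iota ` Mg (n + d)"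
    proof (intro allI ballI)
      fix d s assume s: "s \<in> ideal_pow (Rge Rg T) P \<inter> Rp Rg d"
      have sN: "Nact s x \<in> N'" using nt1 I1 s by blast
      have sg': "Nact s x \<in> Ng (d + n)" using actN s x by blast
      have fq: "f (Nact s x) \<in> Q_grading Rg Mc Mg Qc Qact iota (d + n)"
        using hgf sN sg' unfolding homogeneous_map_def by blast
      have eq: "Qact s (g x) = f (Nact s x)" using hom_act[OF homg xC, of s] gf sN by simp
      have inM: "Qact s (g x) \<in> iota ` Mc" using A s by blast
      have "Qact s (g x) \<in> iota ` Mg (d + n)"
        using LemA[OF lsgM ih tz k1 ore H inM] fq eq by simp
      then show "Qact s (g x) \<in> iota ` Mg (n + d)" by (simp add: add.commute)
    qed
    show "g x \<in> Q_grading Rg Mc Mg Qc Qact iota n"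
      unfolding Q_grading_def using \<xi> A B by blast
  qed
  have uniq: "\<forall>g1 g2. is_hom Nc Nact Qc Qact g1 \<and> homogeneous_map Nc Ng (Q_grading Rg Mc Mg Qc Qact iota) g1
              \<and> (\<forall>x\<in>N'. g1 x = f x) \<and>
              is_hom Nc Nact Qc Qact g2 \<and> homogeneous_map Nc Ng (Q_grading Rg Mc Mg Qc Qact iota) g2
              \<and> (\<forall>x\<in>N'. g2 x = f x) \<longrightarrow> (\<forall>x\<in>Nc. g1 x = g2 x)"
  proof (intro allI impI ballI)
    fix g1 g2 x
    assume a: "is_hom Nc Nact Qc Qact g1 \<and> homogeneous_map Nc Ng (Q_grading Rg Mc Mg Qc Qact iota) g1
              \<and> (\<forall>x\<in>N'. g1 x = f x) \<and>
              is_hom Nc Nact Qc Qact g2 \<and> homogeneous_map Nc Ng (Q_grading Rg Mc Mg Qc Qact iota) g2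
              \<and> (\<forall>x\<in>N'. g2 x = f x)" and xC: "x \<in> Nc"
    have h1: "is_hom Nc Nact Qc Qact g1" and f1: "\<forall>x\<in>N'. g1 x = f x"
      and h2: "is_hom Nc Nact Qc Qact g2" and f2: "\<forall>x\<in>N'. g2 x = f x" using a by blast+
    have q1: "g1 x \<in> Qc" using h1 xC unfolding is_hom_def by blast
    have q2: "g2 x \<in> Qc" using h2 xC unfolding is_hom_def by blast
    have hq: "g1 x - g2 x \<in> Qc" using lm_diff_in[OF lQ q1 q2] .
    obtain n1 t1 where nt1: "\<forall>a\<in>ideal_pow (Rge Rg t1) n1. Nact a x \<in> N'"
      using torN xC unfolding torsion_mod_def by blast
    have "\<forall>a\<in>ideal_pow (Rge Rg t1) n1. Qact a (g1 x - g2 x) = 0"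
    proof
      fix a assume "a \<in> ideal_pow (Rge Rg t1) n1"
      then have aN: "Nact a x \<in> N'" using nt1 by blast
      have "Qact a (g1 x - g2 x) = Qact a (g1 x) - Qact a (g2 x)" using lm_act_diff[OF lQ q1 q2] .
      also have "\<dots> = g1 (Nact a x) - g2 (Nact a x)" using hom_act[OF h1 xC] hom_act[OF h2 xC] by simp
      also have "\<dots> = 0" using f1 f2 aN by simp
      finally show "Qact a (g1 x - g2 x) = 0" .
    qed
    then have "torsion_elem Rg Qact (g1 x - g2 x)" unfolding torsion_elem_def by blast
    then have "g1 x - g2 x = 0" using tfree hq by blast
    then show "g1 x = g2 x" by simp
  qed
  show ?thesis using homg hg gf uniq by blast
qed

end
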